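(* Let $q_1,q_2,q_3,q_4$ be indeterminates of weights $1,2,3,4$ and $S(y)=y^4+q_1y^3+q_2y^2+q_3y+q_4$. Then the differential equation $(h'(x))^2=S(h(x))$ has a unique solution of the form $h=f'/f$ with $f(x)=x+O(x^2)$, i.e. $h(x)=\frac1x+c_1+c_2x+\dots\in\mathbb{Q}[q_1,q_2,q_3,q_4][[x]][x^{-1}]$. This $h$ determines uniquely the power series $Q(x)=x/f(x)=1+a_1x+a_2x^2+\dots\in\mathbb{Q}[q_1,\dots,q_4][[x]]$, and each $a_n$ is a weighted homogeneous polynomial of weight $n$ in $q_1,\dots,q_4$. *)

theory Defs
  imports "HOL-Library.Poly_Mapping" "HOL-Computational_Algebra.Formal_Laurent_Series"
begin

text \<open>Multivariate polynomials over the rationals: a monomial is a finitely supported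
  exponent vector (variable index to exponent), a polynomial is a
  finitely supported map from monomials to rational coefficients, with convolution product.\<close>
type_synonym mpoly = "(nat \<Rightarrow>\<^sub>0 nat) \<Rightarrow>\<^sub>0 rat"

definition qvar :: "nat \<Rightarrow> mpoly" where
  "qvar i = Poly_Mapping.single (Poly_Mapping.single i 1) 1"

definition in_Qq :: "mpoly \<Rightarrow> bool" where
  "in_Qq p \<longleftrightarrow> (\<forall>m \<in> Poly_Mapping.keys p. Poly_Mapping.keys m \<subseteq> {1,2,3,4})"

definition mweight :: "(nat \<Rightarrow>\<^sub>0 nat) \<Rightarrow> nat" where
  "mweight m = (\<Sum>i\<in>{1,2,3,4}. i * Poly_Mapping.lookup m i)"

definition wt_homog :: "nat \<Rightarrow> mpoly \<Rightarrow> bool" where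
  "wt_homog n p \<longleftrightarrow> in_Qq p \<and> (\<forall>m \<in> Poly_Mapping.keys p. mweight m = n)"

definition S_eval :: "mpoly fls \<Rightarrow> mpoly fls" where
  "S_eval y = y ^ 4 + fls_const (qvar 1) * y ^ 3 + fls_const (qvar 2) * y ^ 2
              + fls_const (qvar 3) * y + fls_const (qvar 4)"

text \<open>f(x) = x + O(x^2) and h = f'/f (written as h * f = f', which is equivalent since
  f is x times a unit).\<close>
definition log_deriv_form :: "mpoly fps \<Rightarrow> mpoly fls \<Rightarrow> bool" where
  "log_deriv_form f h \<longleftrightarrow> fps_nth f 0 = 0 \<and> fps_nth f 1 = 1 \<and>
     h * fps_to_fls f = fps_to_fls (fps_deriv f)"

end

theory Submission
  imports Defs
begin


definition cst :: "rat \<Rightarrow> mpoly" where "cst r = Poly_Mapping.single 0 r"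

lemma of_nat_cst: "(of_nat k :: mpoly) = cst (of_nat k)"
  by (metis cst_def comp_apply of_nat_single)

lemma cst_mult: "cst a * cst b = cst (a * b)"
  by (simp add: cst_def mult_single)

lemma cst_inv: "k \<noteq> 0 \<Longrightarrow> cst (1 / of_nat k) * of_nat k = 1"
  by (simp add: of_nat_cst cst_mult) (simp add: cst_def)

lemma cst_inv2: "k \<noteq> 0 \<Longrightarrow> of_nat k * (cst (1 / of_nat k) * p) = (p::mpoly)"
  by (metis cst_inv mult.assoc mult.commute mult_1)

lemma cst_inv3: "k \<noteq> 0 \<Longrightarrow> of_nat k * p = q \<Longrightarrow> p = cst (1 / of_nat k) * (q::mpoly)"
  by (metis cst_inv mult.assoc mult_1)

lemma mweight_add: "mweight (a + b) = mweight a + mweight b"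
  by (simp add: mweight_def lookup_add algebra_simps)

lemma wt_homog_mult: assumes "wt_homog a p" "wt_homog b q" shows "wt_homog (a+b) (p*q)"
proof -
  have "Poly_Mapping.keys m \<subseteq> {1,2,3,4} \<and> mweight m = a+b" if mk: "m \<in> Poly_Mapping.keys (p*q)" for m
  proof -
    obtain m1 m2 where mm: "m = m1 + m2" "m1 \<in> Poly_Mapping.keys p" "m2 \<in> Poly_Mapping.keys q"
      using keys_mult[of p q] mk by blast
    have "Poly_Mapping.keys m1 \<subseteq> {1,2,3,4}" "Poly_Mapping.keys m2 \<subseteq> {1,2,3,4}" "mweight m1 = a" "mweight m2 = b"
      using assms mm unfolding wt_homog_def in_Qq_def by auto
    then show ?thesis using mm keys_add[of m1 m2] by (auto simp: mweight_add)
  qed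
  then show ?thesis unfolding wt_homog_def in_Qq_def by blast
qed

lemma wt_homog_add: "wt_homog a p \<Longrightarrow> wt_homog a q \<Longrightarrow> wt_homog a (p+q)"
  unfolding wt_homog_def in_Qq_def using keys_add[of p q] by blast

lemma wt_homog_uminus: "wt_homog a p \<Longrightarrow> wt_homog a (-p)"
  unfolding wt_homog_def in_Qq_def by simp

lemma wt_homog_0: "wt_homog a 0"
  unfolding wt_homog_def in_Qq_def by simp

lemma wt_homog_cst: "wt_homog 0 (cst r)"
  unfolding wt_homog_def in_Qq_def cst_def by (simp add: mweight_def)

lemma wt_homog_qvar: "i \<in> {1,2,3,4} \<Longrightarrow> wt_homog i (qvar i)"
  unfolding wt_homog_def in_Qq_def qvar_def by (auto simp: mweight_def lookup_single when_def)

definition homi :: "int \<Rightarrow> mpoly \<Rightarrow> bool" where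
  "homi w p \<longleftrightarrow> p = 0 \<or> (0 \<le> w \<and> wt_homog (nat w) p)"

lemma homi_mult: "homi a p \<Longrightarrow> homi b q \<Longrightarrow> homi (a+b) (p*q)"
  unfolding homi_def using wt_homog_mult[of "nat a" p "nat b" q]
  by (auto simp: nat_add_distrib)

lemma homi_add: "homi a p \<Longrightarrow> homi a q \<Longrightarrow> homi a (p+q)"
  unfolding homi_def using wt_homog_add by auto

lemma homi_uminus: "homi a p \<Longrightarrow> homi a (-p)"
  unfolding homi_def using wt_homog_uminus by auto

lemma homi_diff: "homi a p \<Longrightarrow> homi a q \<Longrightarrow> homi a (p-q)"
  using homi_add homi_uminus by (metis diff_conv_add_uminus)

lemma homi_0: "homi a 0" by (simp add: homi_def)

lemma homi_cst: "homi 0 (cst r)" by (simp add: homi_def wt_homog_cst)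

lemma homi_of_nat: "homi 0 (of_nat k)" by (simp add: of_nat_cst homi_cst)

lemma homi_numeral: "homi 0 (numeral k)"
  using homi_of_nat[of "numeral k"] by simp

lemma homi_one: "homi 0 1"
  using homi_of_nat[of 1] by simp

lemma homi_qvar: "i \<in> {1,2,3,4} \<Longrightarrow> homi (int i) (qvar i)"
  by (simp add: homi_def wt_homog_qvar)

lemma homi_sum: "finite A \<Longrightarrow> (\<And>x. x \<in> A \<Longrightarrow> homi a (f x)) \<Longrightarrow> homi a (\<Sum>x\<in>A. f x)"
  by (induction A rule: finite_induct) (auto intro: homi_add homi_0)

lemma homi_cong: "homi a p \<Longrightarrow> a = b \<Longrightarrow> homi b p" by simp

definition homb :: "nat \<Rightarrow> int \<Rightarrow> mpoly fps \<Rightarrow> bool" where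
  "homb n d a \<longleftrightarrow> (\<forall>i<n. homi (int i + d) (a $ i))"

lemma homb_mono: "homb n d a \<Longrightarrow> m \<le> n \<Longrightarrow> homb m d a"
  unfolding homb_def by auto

lemma homb_cong: "homb n d a \<Longrightarrow> d = e \<Longrightarrow> homb n e a" by simp

lemma homb_mult: "homb n d a \<Longrightarrow> homb n e b \<Longrightarrow> homb n (d+e) (a*b)"
  unfolding homb_def fps_mult_nth
proof (intro allI impI homi_sum)
  fix i j assume A: "\<forall>i<n. homi (int i + d) (a $ i)" "\<forall>i<n. homi (int i + e) (b $ i)"
    and i: "i < n" and j: "j \<in> {0..i}"
  have "homi ((int j + d) + (int (i-j) + e)) (a$j * b$(i-j))"
    using A i j by (intro homi_mult) (auto simp del: of_nat_diff)
  then show "homi (int i + (d + e)) (a $ j * b $ (i - j))"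
    by (rule homi_cong) (use j in auto)
qed simp

lemma homb_add: "homb n d a \<Longrightarrow> homb n d b \<Longrightarrow> homb n d (a+b)"
  unfolding homb_def by (auto intro: homi_add)

lemma homb_diff: "homb n d a \<Longrightarrow> homb n d b \<Longrightarrow> homb n d (a-b)"
  unfolding homb_def by (auto intro: homi_diff)

lemma homb_const: "homi d c \<Longrightarrow> homb n d (fps_const c)"
  unfolding homb_def by (auto simp: homi_0)

lemma homb_one: "homb n 0 1"
  unfolding homb_def by (auto simp: homi_0 homi_one)

lemma homb_numeral: "homb n 0 (numeral k)"
  unfolding homb_def by (auto simp: fps_numeral_nth homi_0 homi_numeral)

lemma homb_X: "homb n d a \<Longrightarrow> homb (Suc n) (d - 1) (fps_X * a)"
  unfolding homb_def
proof (intro allI impI)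
  fix i assume A: "\<forall>i<n. homi (int i + d) (a $ i)" and i: "i < Suc n"
  show "homi (int i + (d - 1)) ((fps_X * a) $ i)"
  proof (cases i)
    case 0 then show ?thesis by (simp add: homi_0)
  next
    case (Suc j)
    have "homi (int j + d) (a $ j)" using A i Suc by auto
    then show ?thesis using Suc by (auto elim!: homi_cong)
  qed
qed

lemma homb_Xpow: "homb n d a \<Longrightarrow> homb (n + k) (d - int k) (fps_X ^ k * a)"
proof (induction k)
  case 0 then show ?case by simp
next
  case (Suc k)
  have "homb (Suc (n + k)) (d - int k - 1) (fps_X * (fps_X ^ k * a))"
    using Suc by (intro homb_X) auto
  then show ?case by (simp add: mult.assoc algebra_simps)
qed

lemma homb_deriv: "homb n d a \<Longrightarrow> homb (n - 1) (d + 1) (fps_deriv a)"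
  unfolding homb_def
proof (intro allI impI)
  fix i assume A: "\<forall>i<n. homi (int i + d) (a $ i)" and i: "i < n - 1"
  have "i + 1 < n" using i by auto
  then have "homi (int (i+1) + d) (a $ (i+1))" using A by blast
  then have H: "homi (0 + (int (i+1) + d)) (of_nat (i+1) * a $ (i+1))"
    by (intro homi_mult homi_of_nat)
  show "homi (int i + (d + 1)) (fps_deriv a $ i)"
  proof -
    have e1: "fps_deriv a $ i = of_nat (i+1) * a$(i+1)" by simp
    have e2: "0 + (int (i+1) + d) = int i + (d + 1)" by simp
    show ?thesis using H unfolding e1 e2 .
  qed
qed

lemma homb_power: "homb n d a \<Longrightarrow> homb n (int k * d) (a ^ k)"
proof (induction k)
  case 0 then show ?case using homb_one by simp
next
  case (Suc k)
  then have "homb n (d + int k * d) (a * a ^ k)" by (intro homb_mult) auto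
  then show ?case by (simp add: algebra_simps)
qed




definition eqb :: "nat \<Rightarrow> 'a fps \<Rightarrow> 'a fps \<Rightarrow> bool" where
  "eqb n a b \<longleftrightarrow> (\<forall>i<n. a $ i = b $ i)"

lemma eqb_refl: "eqb n a a" by (simp add: eqb_def)

lemma eqb_mono: "eqb n a b \<Longrightarrow> m \<le> n \<Longrightarrow> eqb m a b"
  unfolding eqb_def by auto

lemma eqb_mult: "eqb n a b \<Longrightarrow> eqb n c d \<Longrightarrow> eqb n (a*c) (b*(d::'a::comm_ring_1 fps))"
  unfolding eqb_def fps_mult_nth by (auto intro!: sum.cong)

lemma eqb_add: "eqb n a b \<Longrightarrow> eqb n c d \<Longrightarrow> eqb n (a+c) (b+(d::'a::comm_ring_1 fps))"
  unfolding eqb_def by auto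

lemma eqb_diff: "eqb n a b \<Longrightarrow> eqb n c d \<Longrightarrow> eqb n (a-c) (b-(d::'a::comm_ring_1 fps))"
  unfolding eqb_def by auto

lemma eqb_X: "eqb n a b \<Longrightarrow> eqb (Suc n) (fps_X * a) (fps_X * (b::'a::comm_ring_1 fps))"
  unfolding eqb_def by auto

lemma eqb_Xpow: "eqb n a b \<Longrightarrow> eqb (n + k) (fps_X ^ k * a) (fps_X ^ k * (b::'a::comm_ring_1 fps))"
proof (induction k)
  case 0 then show ?case by simp
next
  case (Suc k)
  then have "eqb (Suc (n + k)) (fps_X * (fps_X ^ k * a)) (fps_X * (fps_X ^ k * b))"
    by (intro eqb_X) auto
  then show ?case by (simp add: mult.assoc)
qed

lemma eqb_deriv: "eqb n a b \<Longrightarrow> eqb (n - 1) (fps_deriv a) (fps_deriv (b::'a::comm_ring_1 fps))"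
  unfolding eqb_def by auto

lemma eqb_power: "eqb n a b \<Longrightarrow> eqb n (a ^ k) (b ^ k :: 'a::comm_ring_1 fps)"
  by (induction k) (auto intro: eqb_mult eqb_refl)

definition lf :: "'a::zero list \<Rightarrow> 'a fps" where
  "lf L = Abs_fps (\<lambda>i. if i < length L then L ! i else 0)"

primrec gen :: "(nat \<Rightarrow> 'a::zero fps \<Rightarrow> 'a) \<Rightarrow> nat \<Rightarrow> 'a list" where
  "gen R 0 = []"
| "gen R (Suc n) = gen R n @ [R n (lf (gen R n))]"

lemma gen_length: "length (gen R n) = n"
  by (induction n) auto

lemma gen_prefix: "i < n \<Longrightarrow> gen R (n + k) ! i = gen R n ! i"
  by (induction k) (auto simp: nth_append gen_length)

lemma rec_exists:
  fixes R :: "nat \<Rightarrow> 'a::zero fps \<Rightarrow> 'a"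
  assumes loc: "\<And>n a b. eqb n a b \<Longrightarrow> R n a = R n b"
  shows "\<exists>a. \<forall>n. a $ n = R n a"
proof -
  define a where "a = Abs_fps (\<lambda>n. gen R (Suc n) ! n)"
  have "a $ n = R n a" for n
  proof -
    have "eqb n a (lf (gen R n))"
      unfolding eqb_def
    proof (intro allI impI)
      fix i assume i: "i < n"
      have "gen R (Suc i + (n - Suc i)) ! i = gen R (Suc i) ! i"
        by (rule gen_prefix) simp
      then show "a $ i = lf (gen R n) $ i"
        using i by (simp add: a_def lf_def gen_length)
    qed
    then have "R n a = R n (lf (gen R n))" by (rule loc)
    then show ?thesis by (simp add: a_def gen_length nth_append)
  qed
  then show ?thesis by blast
qed

lemma rec_unique:
  assumes loc: "\<And>n a b. eqb n a b \<Longrightarrow> R n a = R n b"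
    and A: "\<forall>n. a $ n = R n a" and B: "\<forall>n. b $ n = R n b"
  shows "a = b"
proof -
  have "eqb n a b" for n
  proof (induction n)
    case 0 then show ?case by (simp add: eqb_def)
  next
    case (Suc n)
    then have "a $ n = b $ n" using A B loc by metis
    then show ?case using Suc by (auto simp: eqb_def less_Suc_eq)
  qed
  then show ?thesis by (intro fps_ext) (meson eqb_def lessI)
qed

lemma rec_homb:
  assumes A: "\<forall>n. a $ n = R n a"
    and H: "\<And>n a. homb n d a \<Longrightarrow> homi (int n + d) (R n a)"
  shows "homi (int n + d) (a $ n)"
proof -
  have "homb n d a" for n
  proof (induction n)
    case 0 then show ?case by (simp add: homb_def)
  next
    case (Suc n)
    then have "homi (int n + d) (a $ n)" using A H by metis
    then show ?case using Suc by (auto simp: homb_def less_Suc_eq)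
  qed
  then show ?thesis using H A by metis
qed

definition Fg :: "mpoly fps \<Rightarrow> mpoly fps" where
  "Fg g = fps_X^3 * (fps_deriv g)^2 - fps_X * (6*g^2) - fps_X^2*(4*g^3) - fps_X^3 * g^4
     - fps_const (qvar 1) * (1 + fps_X*g)^3 - fps_X * (fps_const (qvar 2) * (1+fps_X*g)^2)
     - fps_X^2 * (fps_const (qvar 3) * (1 + fps_X*g)) - fps_X^3 * fps_const (qvar 4)"

lemma eqb_Fg: assumes "eqb n a b" shows "eqb (Suc n) (Fg a) (Fg b)"
proof -
  have d: "eqb (n - 1 + 3) (fps_X^3 * (fps_deriv a)^2) (fps_X^3 * (fps_deriv b)^2)"
    by (intro eqb_Xpow eqb_power eqb_deriv assms)
  have 1: "eqb (Suc n) (fps_X * (6*a^2)) (fps_X * (6*b^2))"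
    by (intro eqb_X eqb_mult eqb_refl eqb_power assms)
  have 2: "eqb (n+2) (fps_X^2 * (4*a^3)) (fps_X^2 * (4*b^3))"
    by (intro eqb_Xpow eqb_mult eqb_refl eqb_power assms)
  have 3: "eqb (n+3) (fps_X^3 * a^4) (fps_X^3 * b^4)"
    by (intro eqb_Xpow eqb_mult eqb_refl eqb_power assms)
  have p: "eqb (Suc n) (1 + fps_X*a) (1 + fps_X*b)"
    by (intro eqb_add eqb_X eqb_refl assms)
  have 4: "eqb (Suc n) (fps_const (qvar 1) * (1 + fps_X*a)^3) (fps_const (qvar 1) * (1 + fps_X*b)^3)"
    by (intro eqb_mult eqb_refl eqb_power p)
  have 5: "eqb (Suc (Suc n)) (fps_X * (fps_const (qvar 2) * (1+fps_X*a)^2)) (fps_X * (fps_const (qvar 2) * (1+fps_X*b)^2))"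
    by (intro eqb_X eqb_mult eqb_refl eqb_power p)
  have 6: "eqb (Suc n + 2) (fps_X^2 * (fps_const (qvar 3) * (1 + fps_X*a))) (fps_X^2 * (fps_const (qvar 3) * (1 + fps_X*b)))"
    by (intro eqb_Xpow eqb_mult eqb_refl eqb_power p)
  show ?thesis unfolding Fg_def
    by (intro eqb_diff eqb_refl eqb_mono[OF d] eqb_mono[OF 1] eqb_mono[OF 2] eqb_mono[OF 3]
        eqb_mono[OF 4] eqb_mono[OF 5] eqb_mono[OF 6]) auto
qed

lemma homb_Fg: assumes "homb n 1 a" shows "homb (Suc n) 1 (Fg a)"
proof -
  have d: "homb (n - 1 + 3) (int 2 * (1 + 1) - int 3) (fps_X^3 * (fps_deriv a)^2)"
    by (intro homb_Xpow homb_power homb_deriv assms)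
  have 1: "homb (Suc n) (0 + int 2 * 1 - 1) (fps_X * (6*a^2))"
    by (intro homb_X homb_mult homb_numeral homb_power assms)
  have 2: "homb (n+2) (0 + int 3 * 1 - int 2) (fps_X^2 * (4*a^3))"
    by (intro homb_Xpow homb_mult homb_numeral homb_power assms)
  have 3: "homb (n+3) (int 4 * 1 - int 3) (fps_X^3 * a^4)"
    by (intro homb_Xpow homb_power assms)
  have x: "homb (Suc n) (1 - 1) (fps_X*a)"
    by (intro homb_X assms)
  have p: "homb (Suc n) 0 (1 + fps_X*a)"
    using homb_add[OF homb_one x[simplified]] .
  have 4: "homb (Suc n) (int 1 + int 3 * 0) (fps_const (qvar 1) * (1 + fps_X*a)^3)"
    by (intro homb_mult homb_const homi_qvar homb_power p) auto
  have 5: "homb (Suc (Suc n)) (int 2 + int 2 * 0 - 1) (fps_X * (fps_const (qvar 2) * (1+fps_X*a)^2))"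
    by (intro homb_X homb_mult homb_const homi_qvar homb_power p) auto
  have 6: "homb (Suc n + 2) (int 3 + 0 - int 2) (fps_X^2 * (fps_const (qvar 3) * (1 + fps_X*a)))"
    by (intro homb_Xpow homb_mult homb_const homi_qvar p) auto
  have 7: "homb (Suc n + 3) (int 4 - int 3) (fps_X^3 * fps_const (qvar 4))"
    using homb_Xpow[OF homb_const[OF homi_qvar], of 4 "Suc n" 3] by simp
  show ?thesis unfolding Fg_def
    apply (intro homb_diff)
    apply (rule homb_mono[OF homb_cong[OF d]]; simp)
    apply (rule homb_mono[OF homb_cong[OF 1]]; simp)
    apply (rule homb_mono[OF homb_cong[OF 2]]; simp)
    apply (rule homb_mono[OF homb_cong[OF 3]]; simp)
    apply (rule homb_mono[OF homb_cong[OF 4]]; simp)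
    apply (rule homb_mono[OF homb_cong[OF 5]]; simp)
    apply (rule homb_mono[OF homb_cong[OF 6]]; simp)
    apply (rule homb_mono[OF homb_cong[OF 7]]; simp)
    done
qed




lemma alg:
  fixes Xi X G D q1 q2 q3 q4 :: "'a::idom"
  assumes "X*Xi = 1"
  shows "(-(Xi^2) + D)^2 - ((Xi+G)^4 + q1*(Xi+G)^3 + q2*(Xi+G)^2 + q3*(Xi+G) + q4) =
    Xi^3 * (X^3*D^2 - X*(6*G^2) - X^2*(4*G^3) - X^3*G^4 - q1*(1+X*G)^3 - X*(q2*(1+X*G)^2)
       - X^2*(q3*(1+X*G)) - X^3*q4 - (4*G + 2*(X*D)))"
  using assms by algebra

lemma XXi: "fls_X * (fls_X_inv::'a::comm_ring_1 fls) = 1"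
  by (simp add: fls_X_times_conv_shift)

lemma fls_identity:
  fixes g :: "mpoly fps"
  shows "(fls_deriv (fls_X_inv + fps_to_fls g))^2 - S_eval (fls_X_inv + fps_to_fls g) =
    fls_X_inv^3 * fps_to_fls (Fg g - (4*g + 2*(fps_X*fps_deriv g)))"
proof -
  have "fls_deriv (fls_X_inv + fps_to_fls g) = - (fls_X_inv^2) + fps_to_fls (fps_deriv g)"
    by (simp add: fls_deriv_fps_to_fls)
  moreover have one: "fps_to_fls (1::mpoly fps) = 1" by simp
  ultimately show ?thesis
    unfolding S_eval_def Fg_def
    by (simp only: one fls_times_fps_to_fls fps_to_fls_power alg[OF XXi] fps_to_fls_minus fps_to_fls_plus
      fps_X_to_fls fps_const_to_fls fps_to_fls_numeral fps_to_fls_eq_1_iff)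
qed


lemma eq_iff:
  fixes g :: "mpoly fps"
  shows "(fls_deriv (fls_X_inv + fps_to_fls g))^2 = S_eval (fls_X_inv + fps_to_fls g) \<longleftrightarrow>
    Fg g = 4*g + 2*(fps_X*fps_deriv g)"
proof -
  have "(fls_deriv (fls_X_inv + fps_to_fls g))^2 = S_eval (fls_X_inv + fps_to_fls g) \<longleftrightarrow>
     (fls_deriv (fls_X_inv + fps_to_fls g))^2 - S_eval (fls_X_inv + fps_to_fls g) = 0"
    by simp
  also have "\<dots> \<longleftrightarrow> fls_X_inv^3 * fps_to_fls (Fg g - (4*g + 2*(fps_X*fps_deriv g))) = 0"
    by (simp only: fls_identity)
  also have "\<dots> \<longleftrightarrow> Fg g - (4*g + 2*(fps_X*fps_deriv g)) = 0"
    by (simp del: fps_to_fls_minus fps_to_fls_plus)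
  finally show ?thesis by simp
qed

definition Rg :: "nat \<Rightarrow> mpoly fps \<Rightarrow> mpoly" where
  "Rg n a = cst (1 / of_nat (2*n+4)) * (Fg a $ n)"

lemma Rg_local: "eqb n a b \<Longrightarrow> Rg n a = Rg n b"
  using eqb_Fg[of n a b] unfolding eqb_def Rg_def by auto

lemma lin_nth: "(4*g + 2*(fps_X*fps_deriv g)) $ n = of_nat (2*n+4) * (g $ n :: mpoly)"
  by (cases n) (auto simp: numeral_fps_const algebra_simps)

lemma ge_iff: "Fg g = 4*g + 2*(fps_X*fps_deriv g) \<longleftrightarrow> (\<forall>n. g$n = Rg n g)"
proof
  assume A: "Fg g = 4*g + 2*(fps_X*fps_deriv g)"
  show "\<forall>n. g$n = Rg n g"
  proof
    fix n
    have "of_nat (2*n+4) * g $ n = Fg g $ n" using A lin_nth by metis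
    then show "g$n = Rg n g" unfolding Rg_def by (intro cst_inv3) auto
  qed
next
  assume A: "\<forall>n. g$n = Rg n g"
  show "Fg g = 4*g + 2*(fps_X*fps_deriv g)"
  proof (rule fps_ext)
    fix n
    have "(4*g + 2*(fps_X*fps_deriv g)) $ n = of_nat (2*n+4) * (cst (1 / of_nat (2*n+4)) * (Fg g $ n))"
      using A lin_nth unfolding Rg_def by metis
    then show "Fg g $ n = (4*g + 2*(fps_X*fps_deriv g)) $ n"
      using cst_inv2[of "2*n+4" "Fg g $ n"] by simp
  qed
qed

definition gs :: "mpoly fps" where "gs = (SOME g. \<forall>n. g$n = Rg n g)"

lemma gs_rec: "\<forall>n. gs$n = Rg n gs"
  unfolding gs_def using someI_ex[OF rec_exists[OF Rg_local]] .

lemma gs_unique: "\<forall>n. g$n = Rg n g \<Longrightarrow> g = gs"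
  using rec_unique[where R=Rg, OF Rg_local _ gs_rec] by blast

lemma gs_hom: "homi (int n + 1) (gs $ n)"
proof (rule rec_homb[where R=Rg and a=gs, OF gs_rec])
  fix n a assume "homb n 1 a"
  then have "homb (Suc n) 1 (Fg a)" by (rule homb_Fg)
  then have "homi (int n + 1) (Fg a $ n)" unfolding homb_def by auto
  then have "homi (0 + (int n + 1)) (cst (1 / of_nat (2*n+4)) * (Fg a $ n))"
    by (intro homi_mult homi_cst)
  then show "homi (int n + 1) (Rg n a)" by (simp add: Rg_def)
qed

lemma alg2:
  fixes Xi X G U :: "'a::idom"
  assumes "X*Xi = 1"
  shows "(Xi + G) * (X * U) = U + X * (G * U)"
  using assms by algebra

lemma ldf_eq:
  fixes g u :: "mpoly fps"
  shows "(fls_X_inv + fps_to_fls g) * fps_to_fls (fps_X * u) = fps_to_fls (fps_deriv (fps_X * u))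
     \<longleftrightarrow> fps_deriv u = g * u"
proof -
  have e1: "(fls_X_inv + fps_to_fls g) * fps_to_fls (fps_X * u) = fps_to_fls (u + fps_X * (g*u))"
    by (simp only: fls_times_fps_to_fls fps_X_to_fls fps_to_fls_plus alg2[OF XXi])
  have e2: "fps_deriv (fps_X * u) = u + fps_X * fps_deriv u"
    by (simp add: algebra_simps)
  show ?thesis unfolding e1 e2 fps_to_fls_eq_iff by auto
qed

lemma ldf_decomp:
  assumes "log_deriv_form f h"
  obtains g u where "h = fls_X_inv + fps_to_fls g" "f = fps_X * u" "u$0 = 1" "fps_deriv u = g * u"
proof -
  have f0: "f$0 = 0" and f1: "f$1 = 1" and hf: "h * fps_to_fls f = fps_to_fls (fps_deriv f)"
    using assms unfolding log_deriv_form_def by auto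
  define u where "u = fps_shift 1 f"
  have fu: "f = fps_X * u"
  proof (rule fps_ext)
    fix n show "f $ n = (fps_X * u) $ n"
      by (cases n) (auto simp: u_def f0)
  qed
  have u0: "u$0 = 1" using f1 by (simp add: u_def)
  define v where "v = fps_right_inverse u 1"
  have uv: "u * v = 1" using fps_right_inverse[of u 1] u0 by (simp add: v_def)
  have "(u*v)$0 = 1" using uv by simp
  then have v0: "v$0 = 1" by (simp add: u0)
  define k where "k = fps_deriv f * v"
  have k0: "k$0 = 1" using f1 by (simp add: k_def v0)
  have "fls_X * h = fls_X * h * fps_to_fls (u*v)" using uv by simp
  also have "\<dots> = (h * fps_to_fls (fps_X*u)) * fps_to_fls v"
    by (simp add: fls_times_fps_to_fls mult_ac)
  also have "\<dots> = fps_to_fls k" using hf fu by (simp add: k_def fls_times_fps_to_fls)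
  finally have hk: "fls_X * h = fps_to_fls k" .
  define g where "g = fps_shift 1 k"
  have kg: "k = 1 + fps_X * g"
  proof (rule fps_ext)
    fix n show "k $ n = (1 + fps_X * g) $ n"
      by (cases n) (auto simp: g_def k0)
  qed
  have "h = fls_X_inv * (fls_X * h)" using XXi[where 'a=mpoly] by (simp add: mult_ac)
  also have "\<dots> = fls_X_inv * (1 + fls_X * fps_to_fls g)"
    by (simp add: hk kg fls_times_fps_to_fls)
  also have "\<dots> = fls_X_inv + fps_to_fls g" using XXi[where 'a=mpoly]
    by (simp add: algebra_simps)
  finally have hg: "h = fls_X_inv + fps_to_fls g" .
  have "fps_deriv u = g * u" using hf unfolding hg fu ldf_eq .
  then show ?thesis using that hg fu u0 by blast
qed




definition hs :: "mpoly fls" where "hs = fls_X_inv + fps_to_fls gs"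

lemma P_imp:
  assumes "log_deriv_form f h" "(fls_deriv h)^2 = S_eval h"
  shows "h = hs"
proof -
  obtain g u where hg: "h = fls_X_inv + fps_to_fls g" using ldf_decomp[OF assms(1)] by blast
  have "Fg g = 4*g + 2*(fps_X*fps_deriv g)" using assms(2) unfolding hg eq_iff .
  then have "g = gs" using ge_iff gs_unique by blast
  then show ?thesis by (simp add: hg hs_def)
qed

definition Ru :: "nat \<Rightarrow> mpoly fps \<Rightarrow> mpoly" where
  "Ru n a = (if n = 0 then 1 else cst (1 / of_nat n) * (gs * a) $ (n - 1))"

lemma Ru_local: "eqb n a b \<Longrightarrow> Ru n a = Ru n b"
proof -
  assume "eqb n a b"
  then have "eqb n (gs * a) (gs * b)" by (intro eqb_mult eqb_refl)
  then show ?thesis unfolding Ru_def eqb_def by auto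
qed

lemma us_exists: "\<exists>u. u$0 = 1 \<and> fps_deriv u = gs * u"
proof -
  obtain u where u: "\<forall>n. u$n = Ru n u" using rec_exists[where R=Ru, OF Ru_local] by blast
  have "fps_deriv u = gs * u"
  proof (rule fps_ext)
    fix n
    have "fps_deriv u $ n = of_nat (n+1) * (cst (1 / of_nat (n+1)) * (gs * u) $ n)"
      using u by (simp add: Ru_def)
    also have "\<dots> = (gs * u) $ n" by (rule cst_inv2) simp
    finally show "fps_deriv u $ n = (gs * u) $ n" .
  qed
  moreover have "u$0 = 1" using u by (simp add: Ru_def)
  ultimately show ?thesis by blast
qed

lemma P_hs: "(\<exists>f. log_deriv_form f hs) \<and> (fls_deriv hs)^2 = S_eval hs"
proof -
  obtain u where u0: "u$0 = 1" and ud: "fps_deriv u = gs * u" using us_exists by blast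
  have "(fls_X_inv + fps_to_fls gs) * fps_to_fls (fps_X*u) = fps_to_fls (fps_deriv (fps_X*u))"
    using ldf_eq[of gs u] ud by blast
  then have "log_deriv_form (fps_X * u) hs"
    unfolding log_deriv_form_def hs_def using u0 by simp
  moreover have "(fls_deriv hs)^2 = S_eval hs"
    unfolding hs_def eq_iff ge_iff using gs_rec .
  ultimately show ?thesis by blast
qed

definition RQ :: "nat \<Rightarrow> mpoly fps \<Rightarrow> mpoly" where
  "RQ n a = (if n = 0 then 1 else cst (1 / of_nat n) * (- ((gs * a) $ (n - 1))))"

lemma RQ_local: "eqb n a b \<Longrightarrow> RQ n a = RQ n b"
proof -
  assume "eqb n a b"
  then have "eqb n (gs * a) (gs * b)" by (intro eqb_mult eqb_refl)
  then show ?thesis unfolding RQ_def eqb_def by auto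
qed

lemma alg3:
  fixes Q u D g E :: "'a::idom"
  assumes "Q * u = 1" "Q * (g * u) + E * u = 0"
  shows "E = - (g * Q)"
  using assms by algebra

lemma Q_rec:
  assumes "log_deriv_form f hs" "Q * f = fps_X"
  shows "\<forall>n. Q$n = RQ n Q"
proof -
  obtain g u where hg: "hs = fls_X_inv + fps_to_fls g" and fu: "f = fps_X * u"
    and u0: "u$0 = 1" and ud: "fps_deriv u = g * u"
    using ldf_decomp[OF assms(1)] by blast
  have "g = gs" using hg by (simp add: hs_def)
  then have ud: "fps_deriv u = gs * u" using ud by simp
  have "fps_X * (Q * u) = fps_X * 1" using assms(2) fu by (simp add: mult_ac)
  then have Qu: "Q * u = 1" by simp
  have "(Q*u)$0 = 1" using Qu by simp
  then have Q0: "Q$0 = 1" using u0 by simp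
  have "fps_deriv (Q * u) = 0" using Qu by simp
  then have "Q * (gs * u) + fps_deriv Q * u = 0" using ud by simp
  then have QD: "fps_deriv Q = - (gs * Q)" using alg3 Qu by blast
  show ?thesis
  proof
    fix n show "Q$n = RQ n Q"
    proof (cases n)
      case 0 then show ?thesis by (simp add: RQ_def Q0)
    next
      case (Suc m)
      have "of_nat (Suc m) * Q $ Suc m = - ((gs * Q) $ m)"
        using arg_cong[OF QD, of "\<lambda>x. x $ m"] by simp
      then have "Q $ Suc m = cst (1 / of_nat (Suc m)) * (- ((gs * Q) $ m))"
        by (intro cst_inv3) auto
      then show ?thesis by (simp add: RQ_def Suc)
    qed
  qed
qed

lemma RQ_hom: "homb n 0 a \<Longrightarrow> homi (int n + 0) (RQ n a)"
proof (cases n)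
  case 0 then show ?thesis by (simp add: RQ_def homi_one)
next
  case (Suc m)
  assume a: "homb n 0 a"
  have g: "homb n 1 gs" unfolding homb_def using gs_hom by blast
  have "homb n (1 + 0) (gs * a)" by (intro homb_mult g a)
  then have "homi (int m + 1) ((gs * a) $ m)" unfolding homb_def Suc by auto
  then have "homi (0 + (int m + 1)) (cst (1 / of_nat (Suc m)) * (- ((gs * a) $ m)))"
    by (intro homi_mult homi_cst homi_uminus)
  moreover have "0 + (int m + 1) = int n + 0" using Suc by simp
  moreover have "RQ n a = cst (1 / of_nat (Suc m)) * (- ((gs * a) $ m))" using Suc by (simp add: RQ_def)
  ultimately show ?thesis by metis
qed

lemma in_Qq_homi: "homi w p \<Longrightarrow> in_Qq p"
  unfolding homi_def wt_homog_def in_Qq_def by auto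

lemma in_Qq_add: "in_Qq p \<Longrightarrow> in_Qq q \<Longrightarrow> in_Qq (p + q)"
  unfolding in_Qq_def using keys_add[of p q] by blast

lemma in_Qq_hs: "in_Qq (fls_nth hs n)"
proof -
  have a: "in_Qq (fls_nth fls_X_inv n)" unfolding in_Qq_def by simp
  have b: "in_Qq (fls_nth (fps_to_fls gs) n)"
    using in_Qq_homi[OF gs_hom] by (simp add: in_Qq_def)
  show ?thesis unfolding hs_def using in_Qq_add[OF a b] by simp
qed

theorem lemma2p2p1:
  shows "(\<exists>!h :: mpoly fls. (\<exists>f. log_deriv_form f h) \<and> (fls_deriv h) ^ 2 = S_eval h)
    \<and> (\<forall>h :: mpoly fls. (\<exists>f. log_deriv_form f h) \<and> (fls_deriv h) ^ 2 = S_eval h \<longrightarrow>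
          (\<forall>n. in_Qq (fls_nth h n))
        \<and> (\<exists>!Q :: mpoly fps. \<exists>f. log_deriv_form f h \<and> Q * f = fps_X)
        \<and> (\<forall>Q f. log_deriv_form f h \<and> Q * f = fps_X \<longrightarrow>
              fps_nth Q 0 = 1 \<and> (\<forall>n. wt_homog n (fps_nth Q n))))"
proof (rule conjI)
  show "\<exists>!h :: mpoly fls. (\<exists>f. log_deriv_form f h) \<and> (fls_deriv h) ^ 2 = S_eval h"
    using P_hs P_imp by blast
next
  show "\<forall>h :: mpoly fls. (\<exists>f. log_deriv_form f h) \<and> (fls_deriv h) ^ 2 = S_eval h \<longrightarrow>
          (\<forall>n. in_Qq (fls_nth h n))
        \<and> (\<exists>!Q :: mpoly fps. \<exists>f. log_deriv_form f h \<and> Q * f = fps_X)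
        \<and> (\<forall>Q f. log_deriv_form f h \<and> Q * f = fps_X \<longrightarrow>
              fps_nth Q 0 = 1 \<and> (\<forall>n. wt_homog n (fps_nth Q n)))"
  proof (intro allI impI)
  fix h :: "mpoly fls"
  assume P: "(\<exists>f. log_deriv_form f h) \<and> (fls_deriv h) ^ 2 = S_eval h"
  then have h: "h = hs" using P_imp by blast
  have c1: "\<forall>n. in_Qq (fls_nth h n)" using in_Qq_hs h by simp
  have c2: "\<exists>!Q :: mpoly fps. \<exists>f. log_deriv_form f h \<and> Q * f = fps_X"
  proof -
    obtain u where u0: "u$0 = 1" and ud: "fps_deriv u = gs * u" using us_exists by blast
    have "(fls_X_inv + fps_to_fls gs) * fps_to_fls (fps_X*u) = fps_to_fls (fps_deriv (fps_X*u))"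
      using ldf_eq[of gs u] ud by blast
    then have L: "log_deriv_form (fps_X * u) hs"
      unfolding log_deriv_form_def hs_def using u0 by simp
    define Q where "Q = fps_right_inverse u 1"
    have "u * Q = 1" using fps_right_inverse[of u 1] u0 by (simp add: Q_def)
    then have "Q * (fps_X * u) = fps_X" by (simp add: mult_ac)
    then have ex: "\<exists>f. log_deriv_form f h \<and> Q * f = fps_X" using L h by blast
    have un: "Qa = Qb" if "\<exists>f. log_deriv_form f h \<and> Qa * f = fps_X"
      "\<exists>f. log_deriv_form f h \<and> Qb * f = fps_X" for Qa Qb
    proof -
      have "\<forall>n. Qa $ n = RQ n Qa" "\<forall>n. Qb $ n = RQ n Qb" using that Q_rec h by blast+
      then show ?thesis using rec_unique[where R=RQ, OF RQ_local] by blast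
    qed
    show ?thesis using ex un by blast
  qed
  have c3: "\<forall>Q f. log_deriv_form f h \<and> Q * f = fps_X \<longrightarrow>
              fps_nth Q 0 = 1 \<and> (\<forall>n. wt_homog n (fps_nth Q n))"
  proof (intro allI impI)
    fix Q f
    assume A: "log_deriv_form f h \<and> Q * f = fps_X"
    then have R: "\<forall>n. Q$n = RQ n Q" using Q_rec h by blast
    show "fps_nth Q 0 = 1 \<and> (\<forall>n. wt_homog n (fps_nth Q n))"
    proof
      show "fps_nth Q 0 = 1" using R by (simp add: RQ_def)
      show "\<forall>n. wt_homog n (fps_nth Q n)"
      proof
        fix n
        have "homi (int n + 0) (Q $ n)" by (rule rec_homb[where R=RQ, OF R RQ_hom])
        then show "wt_homog n (fps_nth Q n)" by (auto simp: homi_def wt_homog_0)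
      qed
    qed
  qed
  show "(\<forall>n. in_Qq (fls_nth h n))
        \<and> (\<exists>!Q :: mpoly fps. \<exists>f. log_deriv_form f h \<and> Q * f = fps_X)
        \<and> (\<forall>Q f. log_deriv_form f h \<and> Q * f = fps_X \<longrightarrow>
              fps_nth Q 0 = 1 \<and> (\<forall>n. wt_homog n (fps_nth Q n)))"
    using c1 c2 c3 by blast
  qed
qed


end
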